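(* Let $\alpha > 1$, $\varepsilon > 0$, $\delta \in [0,1)$. For $q \in [0,1]$ define $$L(q) = \max\left\{p \in [q,1] : D^\delta_\alpha(\mathrm{Ber}(p)\|\mathrm{Ber}(q)) \le \varepsilon \ \text{and}\ D^\delta_\alpha(\mathrm{Ber}(q)\|\mathrm{Ber}(p)) \le \varepsilon\right\},$$ and define $\pi^*:\mathbb{Z}_{\ge 0}\to[0,1]$ by $\pi^*(0) = 0$ and $\pi^*(n) = L(\pi^*(n-1))$ for $n > 0$. Then $\pi^*$ is a partition selection primitive that is $(\delta,\alpha,\varepsilon)$-RDP for $\Delta_1 = 1$, and for every partition selection primitive $\pi$ that is $(\delta,\alpha,\varepsilon)$-RDP for $\Delta_1 = 1$ we have $\pi(n) \le \pi^*(n)$ for all $n \in \mathbb{N}$. (Equivalently, $\pi^*$ is the optimal partition selection primitive for $(\delta,\alpha,\varepsilon)$-RDP with $\Delta_1 = 1$.)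
   Context: $\mathrm{Ber}(p)$ is the Bernoulli distribution with success probability $p$. For $\alpha>1$, $D_\alpha(P\|Q) = \frac{1}{\alpha-1}\log\sum_x P(x)^\alpha Q(x)^{1-\alpha}$ (infinite if $P$ is not absolutely continuous w.r.t. $Q$), and $D^\delta_\alpha(P\|Q) = \inf\{D_\alpha(P'\|Q') : P = (1-\delta)P' + \delta P'',\ Q = (1-\delta)Q' + \delta Q''\}$ over probability distributions $P',P'',Q',Q''$. A randomized algorithm $M$ is $(\delta,\alpha,\varepsilon)$-RDP ($\delta$-approximate $(\alpha,\varepsilon)$-Rényi DP) with respect to a neighboring relation if $D^\delta_\alpha(M(X)\|M(X')) \le \varepsilon$ for all neighboring $X, X'$ (in both orders). Let $U$ be a universe; a dataset is $X \in \mathbb{Z}_{\ge0}^U$ (finitely supported), $X_u$ being the count of item $u$. Datasets $X, X'$ are neighbors under $L^1$ norm bound $\Delta$ (written $\Delta_1 = \Delta$) if $\|X - X'\|_1 \le \Delta$. A partition selection primitive is a function $\pi:\mathbb{Z}_{\ge0}\to[0,1]$ with $\pi(0)=0$; its mechanism $M_\pi$ outputs the random set containing each $u\in U$ independently with probability $\pi(X_u)$. $\pi$ is $(\delta,\alpha,\varepsilon)$-RDP for $\Delta_1=\Delta$ if $M_\pi$ is $(\delta,\alpha,\varepsilon)$-RDP under this neighboring notion. *)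

theory Defs
  imports "HOL-Probability.Probability"
begin

text \<open>Terms with P(x) = 0 contribute 0.\<close>
definition renyi_div :: "real \<Rightarrow> 'a pmf \<Rightarrow> 'a pmf \<Rightarrow> ereal" where
  "renyi_div \<alpha> P Q =
     (if set_pmf P \<subseteq> set_pmf Q \<and>
         (\<lambda>x. pmf P x powr \<alpha> * pmf Q x powr (1 - \<alpha>)) summable_on UNIV
      then ereal (1 / (\<alpha> - 1) *
             ln (\<Sum>\<^sub>\<infinity>x. pmf P x powr \<alpha> * pmf Q x powr (1 - \<alpha>)))
      else \<infinity>)"

definition approx_renyi_div :: "real \<Rightarrow> real \<Rightarrow> 'a pmf \<Rightarrow> 'a pmf \<Rightarrow> ereal" where
  "approx_renyi_div \<delta> \<alpha> P Q =
     Inf {renyi_div \<alpha> P' Q' | P' P'' Q' Q''.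
            (\<forall>x. pmf P x = (1 - \<delta>) * pmf P' x + \<delta> * pmf P'' x) \<and>
            (\<forall>x. pmf Q x = (1 - \<delta>) * pmf Q' x + \<delta> * pmf Q'' x)}"

definition dataset :: "'u set \<Rightarrow> ('u \<Rightarrow> nat) \<Rightarrow> bool" where
  "dataset U X \<longleftrightarrow> finite {u. X u \<noteq> 0} \<and> {u. X u \<noteq> 0} \<subseteq> U"

definition l1_neighbors :: "nat \<Rightarrow> ('u \<Rightarrow> nat) \<Rightarrow> ('u \<Rightarrow> nat) \<Rightarrow> bool" where
  "l1_neighbors \<Delta> X X' \<longleftrightarrow>
     (\<Sum>u\<in>{u. X u \<noteq> 0} \<union> {u. X' u \<noteq> 0}. \<bar>int (X u) - int (X' u)\<bar>) \<le> int \<Delta>"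

definition partition_selection_primitive :: "(nat \<Rightarrow> real) \<Rightarrow> bool" where
  "partition_selection_primitive \<pi> \<longleftrightarrow> \<pi> 0 = 0 \<and> (\<forall>n. 0 \<le> \<pi> n \<and> \<pi> n \<le> 1)"

text \<open>The mechanism M_pi: each item u is included independently with probability pi(X u).
  Items with count 0 are included with probability pi 0 = 0, so only the (finite)
  support needs to be sampled.\<close>
definition psp_mech :: "(nat \<Rightarrow> real) \<Rightarrow> ('u \<Rightarrow> nat) \<Rightarrow> 'u set pmf" where
  "psp_mech \<pi> X = map_pmf (\<lambda>b. {u. b u})
      (Pi_pmf {u. X u \<noteq> 0} False (\<lambda>u. bernoulli_pmf (\<pi> (X u))))"

definition psp_rdp :: "'u set \<Rightarrow> real \<Rightarrow> real \<Rightarrow> real \<Rightarrow> nat \<Rightarrow> (nat \<Rightarrow> real) \<Rightarrow> bool" where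
  "psp_rdp U \<delta> \<alpha> \<epsilon> \<Delta> \<pi> \<longleftrightarrow>
     (\<forall>X X'. dataset U X \<and> dataset U X' \<and> l1_neighbors \<Delta> X X' \<longrightarrow>
        approx_renyi_div \<delta> \<alpha> (psp_mech \<pi> X) (psp_mech \<pi> X') \<le> ereal \<epsilon>)"

definition L_step :: "real \<Rightarrow> real \<Rightarrow> real \<Rightarrow> real \<Rightarrow> real" where
  "L_step \<delta> \<alpha> \<epsilon> q = (GREATEST p. p \<in> {q..1} \<and>
      approx_renyi_div \<delta> \<alpha> (bernoulli_pmf p) (bernoulli_pmf q) \<le> ereal \<epsilon> \<and>
      approx_renyi_div \<delta> \<alpha> (bernoulli_pmf q) (bernoulli_pmf p) \<le> ereal \<epsilon>)"

primrec pi_star :: "real \<Rightarrow> real \<Rightarrow> real \<Rightarrow> nat \<Rightarrow> real" where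
  "pi_star \<delta> \<alpha> \<epsilon> 0 = 0"
| "pi_star \<delta> \<alpha> \<epsilon> (Suc n) = L_step \<delta> \<alpha> \<epsilon> (pi_star \<delta> \<alpha> \<epsilon> n)"

end

theory Submission
  imports Defs
begin


definition Phi :: "real \<Rightarrow> real \<Rightarrow> real \<Rightarrow> real \<Rightarrow> real" where
 "Phi a c x y = (max 0 x) powr a * (max 0 (1-y)) powr (a-1) + (max 0 (1-x)) powr a * (max 0 y) powr (a-1)
     - c * (max 0 y) powr (a-1) * (max 0 (1-y)) powr (a-1)"

lemma Phi_simp: "0 \<le> x \<Longrightarrow> x \<le> 1 \<Longrightarrow> 0 \<le> y \<Longrightarrow> y \<le> 1 \<Longrightarrow>
  Phi a c x y = x powr a * (1-y) powr (a-1) + (1-x) powr a * y powr (a-1) - c * y powr (a-1) * (1-y) powr (a-1)"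
  by (simp add: Phi_def)

lemma Phi_sym: "0 \<le> x \<Longrightarrow> x \<le> 1 \<Longrightarrow> 0 \<le> y \<Longrightarrow> y \<le> 1 \<Longrightarrow> Phi a c (1-x) (1-y) = Phi a c x y"
  by (simp add: Phi_simp algebra_simps)

lemma renyi_bool:
  fixes P Q :: "bool pmf"
  shows "renyi_div a P Q = (if set_pmf P \<subseteq> set_pmf Q then
     ereal (1/(a-1) * ln (pmf P True powr a * pmf Q True powr (1-a) + pmf P False powr a * pmf Q False powr (1-a))) else \<infinity>)"
  unfolding renyi_div_def by (simp add: UNIV_bool add.commute)

lemma set_pmf_ber_sub:
  assumes "0 \<le> x" "x \<le> 1" "0 \<le> y" "y \<le> 1"
  shows "set_pmf (bernoulli_pmf x) \<subseteq> set_pmf (bernoulli_pmf y) \<longleftrightarrow> ((x > 0 \<longrightarrow> y > 0) \<and> (x < 1 \<longrightarrow> y < 1))"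
proof -
  have "set_pmf (bernoulli_pmf x) \<subseteq> set_pmf (bernoulli_pmf y) \<longleftrightarrow>
     (\<forall>b. pmf (bernoulli_pmf x) b \<noteq> 0 \<longrightarrow> pmf (bernoulli_pmf y) b \<noteq> 0)"
    by (auto simp: set_pmf_iff)
  also have "\<dots> \<longleftrightarrow> ((x > 0 \<longrightarrow> y > 0) \<and> (x < 1 \<longrightarrow> y < 1))"
    using assms by (auto simp: all_bool_eq)
  finally show ?thesis .
qed



lemma powr_inv_cancel: "0 < y \<Longrightarrow> y powr (1-a) * y powr (a-1) = (1::real)"
  by (simp add: powr_add[symmetric])

lemma renyi_ber_le:
  assumes a: "1 < a" and e: "0 \<le> e" and x: "0 \<le> x" "x \<le> 1" and y: "0 \<le> y" "y \<le> 1"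
  shows "renyi_div a (bernoulli_pmf x) (bernoulli_pmf y) \<le> ereal e \<longleftrightarrow> Phi a (exp ((a-1)*e)) x y \<le> 0"
proof -
  define c where "c = exp ((a-1)*e)"
  have c1: "1 \<le> c" unfolding c_def using a e by simp
  show ?thesis
  proof (cases "y = 0")
    case True
    then show ?thesis using x y a c1 e
      by (auto simp: renyi_bool set_pmf_ber_sub Phi_simp c_def[symmetric])
  next
    case y0: False
    show ?thesis
    proof (cases "y = 1")
      case True
      then show ?thesis using x y a c1 e
        by (auto simp: renyi_bool set_pmf_ber_sub Phi_simp c_def[symmetric])
    next
      case False
      with y0 y have yy: "0 < y" "y < 1" by auto
      define K where "K = x powr a * y powr (1-a) + (1-x) powr a * (1-y) powr (1-a)"
      have Kpos: "0 < K"
      proof (cases "x = 0")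
        case True thus ?thesis using yy unfolding K_def by simp
      next
        case False thus ?thesis using yy x unfolding K_def
          by (intro add_pos_nonneg) auto
      qed
      have r: "renyi_div a (bernoulli_pmf x) (bernoulli_pmf y) = ereal (1/(a-1) * ln K)"
        using x yy by (simp add: renyi_bool set_pmf_ber_sub K_def)
      have "ereal (1/(a-1) * ln K) \<le> ereal e \<longleftrightarrow> ln K \<le> (a-1)*e"
        using a by (simp add: field_simps)
      also have "\<dots> \<longleftrightarrow> K \<le> c" unfolding c_def using Kpos
        by (metis exp_le_cancel_iff exp_ln ln_exp)
      also have "\<dots> \<longleftrightarrow> K * (y powr (a-1) * (1-y) powr (a-1)) \<le> c * (y powr (a-1) * (1-y) powr (a-1))"
        using yy by (intro mult_le_cancel_right_pos[symmetric]) simp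
      also have "K * (y powr (a-1) * (1-y) powr (a-1)) = x powr a * (1-y) powr (a-1) + (1-x) powr a * y powr (a-1)"
      proof -
        have "K * (y powr (a-1) * (1-y) powr (a-1)) = x powr a * (1-y) powr (a-1) * (y powr (1-a) * y powr (a-1))
             + (1-x) powr a * y powr (a-1) * ((1-y) powr (1-a) * (1-y) powr (a-1))"
          unfolding K_def by (simp add: algebra_simps)
        also have "\<dots> = x powr a * (1-y) powr (a-1) + (1-x) powr a * y powr (a-1)"
          using yy by (simp add: powr_inv_cancel)
        finally show ?thesis .
      qed
      finally have fin: "renyi_div a (bernoulli_pmf x) (bernoulli_pmf y) \<le> ereal e \<longleftrightarrow>
          x powr a * (1-y) powr (a-1) + (1-x) powr a * y powr (a-1) \<le> c * (y powr (a-1) * (1-y) powr (a-1))"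
        using r by simp
      have eq: "Phi a c x y = (x powr a * (1-y) powr (a-1) + (1-x) powr a * y powr (a-1)) - c * (y powr (a-1) * (1-y) powr (a-1))"
        using x y by (simp add: Phi_simp mult.assoc)
      show ?thesis unfolding c_def[symmetric] fin eq by linarith
    qed
  qed
qed



lemma powr_split: "0 < (x::real) \<Longrightarrow> x powr a = x * x powr (a-1)"
proof -
  assume "0 < x"
  have "x powr (1 + (a-1)) = x powr 1 * x powr (a-1)" by (rule powr_add)
  thus ?thesis using \<open>0 < x\<close> by simp
qed

lemma Phi_self: assumes "0 \<le> x" "x \<le> 1" "1 \<le> c" "1 < a" shows "Phi a c x x \<le> 0"
proof (cases "x = 0 \<or> x = 1")
  case True thus ?thesis using assms by (auto simp: Phi_simp)
next
  case False
  hence x: "0 < x" "x < 1" using assms by auto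
  have "Phi a c x x = x powr (a-1) * (1-x) powr (a-1) * (x + (1-x) - c)"
    using x assms by (simp add: Phi_simp powr_split[of x a] powr_split[of "1-x" a] algebra_simps)
  also have "\<dots> \<le> 0" using x assms by (intro mult_nonneg_nonpos) auto
  finally show ?thesis .
qed

lemma Phi_mono2_aux:
  assumes a: "1 < a" and yt: "0 \<le> y" "y \<le> t" "t \<le> x" "x \<le> 1" and P: "Phi a c y x \<le> 0"
  shows "Phi a c t x \<le> 0"
proof -
  define C where "C = (1-x) powr (a-1)"
  define D where "D = x powr (a-1)"
  define g where "g s = s powr a * C + (1-s) powr a * D" for s
  have Pg: "Phi a c s x = g s - c * D * C" if "0 \<le> s" "s \<le> 1" for s
    using that yt unfolding g_def C_def D_def by (simp add: Phi_simp)
  have "g t \<le> g y"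
  proof (rule DERIV_nonpos_imp_decreasing_open[OF yt(2)])
    fix s assume s: "y < s" "s < t"
    hence s01: "0 < s" "s < 1" using yt by auto
    have "(g has_real_derivative (a * s powr (a-1) * C - a * (1-s) powr (a-1) * D)) (at s)"
      unfolding g_def using s01 by (auto intro!: derivative_eq_intros)
    moreover have "a * s powr (a-1) * C - a * (1-s) powr (a-1) * D \<le> 0"
    proof -
      have "s * (1-x) \<le> (1-s) * x" using s yt by (simp add: algebra_simps)
      hence "(s * (1-x)) powr (a-1) \<le> ((1-s) * x) powr (a-1)"
        using s01 yt a by (intro powr_mono2) auto
      hence "s powr (a-1) * C \<le> (1-s) powr (a-1) * D"
        unfolding C_def D_def using s01 yt by (simp add: powr_mult)
      thus ?thesis using a by (simp add: mult.assoc)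
    qed
    ultimately show "\<exists>d. (g has_real_derivative d) (at s) \<and> d \<le> 0" by blast
  next
    show "continuous_on {y..t} g" unfolding g_def using yt a
      by (intro continuous_intros continuous_on_powr') auto
  qed
  thus ?thesis using P Pg[of y] Pg[of t] yt by auto
qed



lemma Phi_mono1_aux:
  assumes a: "1 < a" and c: "1 \<le> c" and yt: "0 \<le> y" "y \<le> t" "t \<le> x" "x \<le> 1" and P: "Phi a c x y \<le> 0"
  shows "Phi a c x t \<le> 0"
proof (cases "t = x")
  case True thus ?thesis using Phi_self[of x c a] assms by auto
next
  case tx: False
  show ?thesis
  proof (cases "y = 0")
    case True
    hence "x powr a \<le> 0" using P yt a by (simp add: Phi_simp)
    hence "x = 0" using yt by (smt (verit) powr_gt_zero)
    thus ?thesis using tx yt by auto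
  next
    case False
    hence s01: "0 < y" "t < 1" using yt tx by auto
    define K where "K s = x powr a * s powr (1-a) + (1-x) powr a * (1-s) powr (1-a)" for s
    have PK: "Phi a c x s = s powr (a-1) * (1-s) powr (a-1) * (K s - c)" if "0 < s" "s < 1" for s
    proof -
      have "Phi a c x s = x powr a * (1-s) powr (a-1) * (s powr (1-a) * s powr (a-1))
             + (1-x) powr a * s powr (a-1) * ((1-s) powr (1-a) * (1-s) powr (a-1)) - c * s powr (a-1) * (1-s) powr (a-1)"
        using that yt by (simp add: Phi_simp powr_inv_cancel)
      thus ?thesis unfolding K_def by (simp add: algebra_simps)
    qed
    have "K t \<le> K y"
    proof (rule DERIV_nonpos_imp_decreasing_open[OF yt(2)])
      fix s assume s: "y < s" "s < t"
      hence s1: "0 < s" "s < 1" using s01 by auto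
      have "(K has_real_derivative (x powr a * ((1-a) * s powr (1-a-1)) - (1-x) powr a * ((1-a) * (1-s) powr (1-a-1)))) (at s)"
        unfolding K_def using s1 by (auto intro!: derivative_eq_intros)
      moreover have "x powr a * ((1-a) * s powr (1-a-1)) - (1-x) powr a * ((1-a) * (1-s) powr (1-a-1)) \<le> 0"
      proof -
        have "(1-x) * s \<le> x * (1-s)" using s yt by (simp add: algebra_simps)
        hence "((1-x) * s) powr a \<le> (x * (1-s)) powr a"
          using s1 yt a by (intro powr_mono2) auto
        hence i: "(1-x) powr a * s powr a \<le> x powr a * (1-s) powr a"
          using s1 yt by (simp add: powr_mult)
        have "(1-x) powr a * (1-s) powr (-a) \<le> x powr a * s powr (-a)"
        proof -
          have "(1-x) powr a * (1-s) powr (-a) = ((1-x) powr a * s powr a) * (s powr (-a) * (1-s) powr (-a))"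
            using s1 by (simp add: powr_add[symmetric] algebra_simps)
          also have "\<dots> \<le> (x powr a * (1-s) powr a) * (s powr (-a) * (1-s) powr (-a))"
            using i by (intro mult_right_mono) auto
          also have "\<dots> = x powr a * s powr (-a)"
            using s1 by (simp add: powr_add[symmetric] algebra_simps)
          finally show ?thesis .
        qed
        hence "0 \<le> (a-1) * (x powr a * s powr (-a) - (1-x) powr a * (1-s) powr (-a))" using a by simp
        thus ?thesis by (simp add: algebra_simps)
      qed
      ultimately show "\<exists>d. (K has_real_derivative d) (at s) \<and> d \<le> 0" by blast
    next
      show "continuous_on {y..t} K" unfolding K_def using s01 yt
        by (intro continuous_intros) auto
    qed
    moreover have "K y \<le> c"
    proof -
      have "0 < y powr (a-1) * (1-y) powr (a-1)" using s01 yt by simp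
      moreover have "y powr (a-1) * (1-y) powr (a-1) * (K y - c) \<le> 0" using P PK[of y] s01 yt by auto
      ultimately show ?thesis using s01 yt by (auto simp add: mult_le_0_iff)
    qed
    ultimately have "K t - c \<le> 0" by simp
    moreover have "0 < t" using s01 yt by auto
    ultimately show ?thesis using PK[of t] s01 by (simp add: mult_nonneg_nonpos)
  qed
qed



lemma Phi_mono1:
  assumes a: "1 < a" and c: "1 \<le> c" and xy: "0 \<le> x" "x \<le> 1" "0 \<le> y" "y \<le> 1"
    and t: "min y x \<le> t" "t \<le> max y x" and P: "Phi a c x y \<le> 0"
  shows "Phi a c x t \<le> 0"
proof (cases "y \<le> x")
  case True thus ?thesis using Phi_mono1_aux[OF a c, of y t x] assms by auto
next
  case False
  have "Phi a c (1-x) (1-y) \<le> 0" using P Phi_sym xy by simp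
  hence "Phi a c (1-x) (1-t) \<le> 0" using Phi_mono1_aux[OF a c, of "1-y" "1-t" "1-x"] assms False by auto
  thus ?thesis using Phi_sym[of x t] xy t False by auto
qed

lemma Phi_mono2:
  assumes a: "1 < a" and xy: "0 \<le> x" "x \<le> 1" "0 \<le> y" "y \<le> 1"
    and t: "min y x \<le> t" "t \<le> max y x" and P: "Phi a c y x \<le> 0"
  shows "Phi a c t x \<le> 0"
proof (cases "y \<le> x")
  case True thus ?thesis using Phi_mono2_aux[OF a, of y t x] assms by auto
next
  case False
  have "Phi a c (1-y) (1-x) \<le> 0" using P Phi_sym xy by simp
  hence "Phi a c (1-t) (1-x) \<le> 0" using Phi_mono2_aux[OF a, of "1-y" "1-t" "1-x"] assms False by auto
  thus ?thesis using Phi_sym[of t x] xy t False by auto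
qed

lemma continuous_Phi:
  assumes a: "1 < a" and "continuous_on UNIV C" "continuous_on UNIV X" "continuous_on UNIV Y"
  shows "continuous_on UNIV (\<lambda>v. Phi a (C v) (X v) (Y v))"
proof -
  have h: "continuous_on UNIV (\<lambda>v. (max 0 (F v)) powr b)" if "continuous_on UNIV F" "0 < b" for F :: "'a \<Rightarrow> real" and b
    by (rule continuous_on_powr') (use that in \<open>auto intro: continuous_on_max continuous_on_const\<close>)
  have 1: "continuous_on UNIV (\<lambda>v. 1 - X v)" "continuous_on UNIV (\<lambda>v. 1 - Y v)"
    using assms by (auto intro: continuous_on_diff continuous_on_const)
  show ?thesis unfolding Phi_def
    by (intro continuous_on_add continuous_on_diff continuous_on_mult h assms 1) (use a in auto)
qed

lemma closed_proj:
  fixes G1 G2 G3 :: "real \<times> real \<times> real \<times> real \<times> real \<Rightarrow> real"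
  assumes "continuous_on UNIV G1" "continuous_on UNIV G2" "continuous_on UNIV G3"
  shows "closed {t \<in> {lo..hi}. \<exists>x z y w. x \<in> {0..1} \<and> z \<in> {0..1} \<and> y \<in> {0..1} \<and> w \<in> {0..1}
     \<and> G1 (t,x,z,y,w) = 0 \<and> G2 (t,x,z,y,w) = 0 \<and> G3 (t,x,z,y,w) \<le> 0}"
proof -
  let ?K = "({lo..hi} \<times> {0..1} \<times> {0..1} \<times> {0..1} \<times> {0..1}) \<inter> {v. G1 v = 0 \<and> G2 v = 0 \<and> G3 v \<le> 0}"
  have "compact ?K"
    by (intro compact_Int_closed compact_Times compact_Icc closed_Collect_conj closed_Collect_eq
        closed_Collect_le assms continuous_on_const)
  hence "compact (fst ` ?K)" by (intro compact_continuous_image continuous_on_fst continuous_on_id)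
  moreover have "fst ` ?K = {t \<in> {lo..hi}. \<exists>x z y w. x \<in> {0..1} \<and> z \<in> {0..1} \<and> y \<in> {0..1} \<and> w \<in> {0..1}
     \<and> G1 (t,x,z,y,w) = 0 \<and> G2 (t,x,z,y,w) = 0 \<and> G3 (t,x,z,y,w) \<le> 0}"
  proof (rule set_eqI, rule iffI)
    fix t assume "t \<in> fst ` ?K" thus "t \<in> {t \<in> {lo..hi}. \<exists>x z y w. x \<in> {0..1} \<and> z \<in> {0..1} \<and> y \<in> {0..1} \<and> w \<in> {0..1}
     \<and> G1 (t,x,z,y,w) = 0 \<and> G2 (t,x,z,y,w) = 0 \<and> G3 (t,x,z,y,w) \<le> 0}" by auto blast
  next
    fix t assume "t \<in> {t \<in> {lo..hi}. \<exists>x z y w. x \<in> {0..1} \<and> z \<in> {0..1} \<and> y \<in> {0..1} \<and> w \<in> {0..1}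
     \<and> G1 (t,x,z,y,w) = 0 \<and> G2 (t,x,z,y,w) = 0 \<and> G3 (t,x,z,y,w) \<le> 0}"
    then obtain x z y w where "t \<in> {lo..hi}" "x \<in> {0..1}" "z \<in> {0..1}" "y \<in> {0..1}" "w \<in> {0..1}"
      "G1 (t,x,z,y,w) = 0" "G2 (t,x,z,y,w) = 0" "G3 (t,x,z,y,w) \<le> 0" by blast
    hence "(t,x,z,y,w) \<in> ?K" by simp
    thus "t \<in> fst ` ?K" by (rule image_eqI[rotated]) simp
  qed
  ultimately show ?thesis by (simp add: compact_imp_closed)
qed

definition Edec :: "real \<Rightarrow> real \<Rightarrow> real \<Rightarrow> real \<Rightarrow> real \<Rightarrow> bool" where
  "Edec \<delta> a c p q \<longleftrightarrow> (\<exists>x z y w. x \<in> {0..1} \<and> z \<in> {0..1} \<and> y \<in> {0..1} \<and> w \<in> {0..1} \<and>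
     p = (1-\<delta>)*x + \<delta>*z \<and> q = (1-\<delta>)*y + \<delta>*w \<and> Phi a c x y \<le> 0)"



lemma bool_pmf_ber: fixes P :: "bool pmf" shows "P = bernoulli_pmf (pmf P True)"
proof (rule pmf_eqI)
  fix b
  have "pmf P False + pmf P True = 1" using sum_pmf_eq_1[of UNIV P] by (auto simp: UNIV_bool)
  hence s: "pmf P True + pmf P False = 1" by linarith
  show "pmf P b = pmf (bernoulli_pmf (pmf P True)) b"
    using s pmf_le_1[of P True] by (cases b) auto
qed

lemma ber_mix:
  assumes "0 \<le> \<delta>" "\<delta> \<le> 1" "x \<in> {0..1}" "z \<in> {0..1}" "p = (1-\<delta>)*x + \<delta>*z"
  shows "pmf (bernoulli_pmf p) b = (1-\<delta>) * pmf (bernoulli_pmf x) b + \<delta> * pmf (bernoulli_pmf z) b"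
proof -
  have "0 \<le> p" using assms by simp
  moreover have "p \<le> 1"
  proof -
    have "(1-\<delta>)*x \<le> (1-\<delta>)" "\<delta>*z \<le> \<delta>" using assms by (auto simp: mult_left_le)
    thus ?thesis using assms by simp
  qed
  ultimately show ?thesis using assms by (cases b) (auto simp: algebra_simps)
qed

lemma approx_ber_le:
  assumes a: "1 < a" and e: "0 \<le> e" and d: "0 \<le> \<delta>" "\<delta> < 1" and p: "0 \<le> p" "p \<le> 1" and q: "0 \<le> q" "q \<le> 1"
  shows "approx_renyi_div \<delta> a (bernoulli_pmf p) (bernoulli_pmf q) \<le> ereal e \<longleftrightarrow> Edec \<delta> a (exp ((a-1)*e)) p q"
proof
  assume "Edec \<delta> a (exp ((a-1)*e)) p q"
  then obtain x z y w where xz: "x \<in> {0..1}" "z \<in> {0..1}" "y \<in> {0..1}" "w \<in> {0..1}"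
    "p = (1-\<delta>)*x + \<delta>*z" "q = (1-\<delta>)*y + \<delta>*w" "Phi a (exp ((a-1)*e)) x y \<le> 0"
    unfolding Edec_def by blast
  have r: "renyi_div a (bernoulli_pmf x) (bernoulli_pmf y) \<le> ereal e"
    using renyi_ber_le[OF a e, of x y] xz by auto
  show "approx_renyi_div \<delta> a (bernoulli_pmf p) (bernoulli_pmf q) \<le> ereal e"
    unfolding approx_renyi_div_def
  proof (rule Inf_lower2[OF _ r], intro CollectI exI conjI allI)
    show "pmf (bernoulli_pmf p) b = (1-\<delta>) * pmf (bernoulli_pmf x) b + \<delta> * pmf (bernoulli_pmf z) b" for b
      using ber_mix[of \<delta> x z p b] d xz by auto
    show "pmf (bernoulli_pmf q) b = (1-\<delta>) * pmf (bernoulli_pmf y) b + \<delta> * pmf (bernoulli_pmf w) b" for b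
      using ber_mix[of \<delta> y w q b] d xz by auto
  qed (rule refl)
next
  assume A: "approx_renyi_div \<delta> a (bernoulli_pmf p) (bernoulli_pmf q) \<le> ereal e"
  define G1 where "G1 = (\<lambda>v::real\<times>real\<times>real\<times>real\<times>real. p - ((1-\<delta>) * fst (snd v) + \<delta> * fst (snd (snd v))))"
  define G2 where "G2 = (\<lambda>v::real\<times>real\<times>real\<times>real\<times>real. q - ((1-\<delta>) * fst (snd (snd (snd v))) + \<delta> * snd (snd (snd (snd v)))))"
  define G3 where "G3 = (\<lambda>v::real\<times>real\<times>real\<times>real\<times>real. Phi a (exp ((a-1)*(e + fst v))) (fst (snd v)) (fst (snd (snd (snd v)))))"
  define CS where "CS = {t \<in> {0..1}. \<exists>x z y w. x \<in> {0..1} \<and> z \<in> {0..1} \<and> y \<in> {0..1} \<and> w \<in> {0..1}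
     \<and> G1 (t,x,z,y,w) = 0 \<and> G2 (t,x,z,y,w) = 0 \<and> G3 (t,x,z,y,w) \<le> 0}"
  have "closed CS" unfolding CS_def
  proof (rule closed_proj)
    show "continuous_on UNIV G1" "continuous_on UNIV G2" unfolding G1_def G2_def
      by (intro continuous_intros)+
    show "continuous_on UNIV G3" unfolding G3_def
      by (intro continuous_Phi a continuous_intros)
  qed
  have mem: "t \<in> CS" if t: "0 < t" "t \<le> 1" for t
  proof -
    have "approx_renyi_div \<delta> a (bernoulli_pmf p) (bernoulli_pmf q) < ereal (e + t)"
      by (rule le_less_trans[OF A]) (use t in simp)
    then obtain P' P'' Q' Q'' :: "bool pmf" where dec:
      "\<forall>x. pmf (bernoulli_pmf p) x = (1-\<delta>) * pmf P' x + \<delta> * pmf P'' x"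
      "\<forall>x. pmf (bernoulli_pmf q) x = (1-\<delta>) * pmf Q' x + \<delta> * pmf Q'' x"
      "renyi_div a P' Q' < ereal (e + t)"
      unfolding approx_renyi_div_def Inf_less_iff by blast
    define x where "x = pmf P' True"
    define z where "z = pmf P'' True"
    define y where "y = pmf Q' True"
    define w where "w = pmf Q'' True"
    have xz: "x \<in> {0..1}" "z \<in> {0..1}" "y \<in> {0..1}" "w \<in> {0..1}"
      unfolding x_def z_def y_def w_def by (auto simp: pmf_le_1)
    have eqs: "p = (1-\<delta>)*x + \<delta>*z" "q = (1-\<delta>)*y + \<delta>*w"
      using dec(1)[rule_format, of True] dec(2)[rule_format, of True] p q
      unfolding x_def z_def y_def w_def by auto
    have "renyi_div a (bernoulli_pmf x) (bernoulli_pmf y) \<le> ereal (e + t)"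
      using dec(3) bool_pmf_ber[of P'] bool_pmf_ber[of Q'] unfolding x_def y_def by simp
    hence "Phi a (exp ((a-1)*(e+t))) x y \<le> 0"
      using renyi_ber_le[OF a, of "e+t" x y] e t xz by auto
    thus ?thesis unfolding CS_def using t xz eqs
      by (intro CollectI conjI exI[of _ x] exI[of _ z] exI[of _ y] exI[of _ w]) (auto simp: G1_def G2_def G3_def)
  qed
  have "(\<lambda>n. inverse (real (Suc n))) \<longlonglongrightarrow> 0" by (rule LIMSEQ_inverse_real_of_nat)
  hence "0 \<in> CS"
    by (rule closed_sequentially[OF \<open>closed CS\<close>, rotated]) (intro mem, auto simp: field_simps)
  thus "Edec \<delta> a (exp ((a-1)*e)) p q"
  proof -
    from \<open>0 \<in> CS\<close> obtain x z y w where "x \<in> {0..1}" "z \<in> {0..1}" "y \<in> {0..1}" "w \<in> {0..1}"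
      "G1 (0,x,z,y,w) = 0" "G2 (0,x,z,y,w) = 0" "G3 (0,x,z,y,w) \<le> 0" unfolding CS_def by blast
    thus ?thesis unfolding Edec_def
      by (intro exI[of _ x] exI[of _ z] exI[of _ y] exI[of _ w]) (auto simp: G1_def G2_def G3_def)
  qed
qed



lemma convex_between:
  assumes "0 \<le> l" "l \<le> (1::real)"
  shows "min y x \<le> l*y + (1-l)*x" "l*y + (1-l)*x \<le> max y x"
proof -
  have "l*y + (1-l)*x - min y x = l*(y - min y x) + (1-l)*(x - min y x)" by (simp add: algebra_simps)
  also have "\<dots> \<ge> 0" using assms by (intro add_nonneg_nonneg mult_nonneg_nonneg) auto
  finally show "min y x \<le> l*y + (1-l)*x" by simp
  have "max y x - (l*y + (1-l)*x) = l*(max y x - y) + (1-l)*(max y x - x)" by (simp add: algebra_simps)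
  also have "\<dots> \<ge> 0" using assms by (intro add_nonneg_nonneg mult_nonneg_nonneg) auto
  finally show "l*y + (1-l)*x \<le> max y x" by simp
qed

lemma unit_between: "0 \<le> l \<Longrightarrow> l \<le> 1 \<Longrightarrow> y \<in> {0..1} \<Longrightarrow> x \<in> {0..(1::real)} \<Longrightarrow> l*y + (1-l)*x \<in> {0..1}"
  using convex_between[of l y x] by auto

lemma mix_eq:
  fixes p q q' l x y z w \<delta> :: real
  assumes "p \<noteq> q" "l = (p - q') / (p - q)" "p = (1-\<delta>)*x + \<delta>*z" "q = (1-\<delta>)*y + \<delta>*w"
  shows "q' = (1-\<delta>)*(l*y + (1-l)*x) + \<delta>*(l*w + (1-l)*z)"
proof -
  have "(1-\<delta>)*(l*y + (1-l)*x) + \<delta>*(l*w + (1-l)*z) = l*q + (1-l)*p"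
    unfolding assms(3,4) by (simp add: algebra_simps)
  also have "\<dots> = p - l*(p-q)" by (simp add: algebra_simps)
  also have "l*(p-q) = p - q'" using assms by simp
  finally show ?thesis by simp
qed

lemma Edec_mono:
  assumes a: "1 < a" and c: "1 \<le> c" and d: "0 \<le> \<delta>" "\<delta> \<le> 1"
    and qq: "q \<le> q'" "q' \<le> p" and E: "Edec \<delta> a c p q"
  shows "Edec \<delta> a c p q'"
proof (cases "p = q")
  case True thus ?thesis using E qq by auto
next
  case pq: False
  from E obtain x z y w where xz: "x \<in> {0..1}" "z \<in> {0..1}" "y \<in> {0..1}" "w \<in> {0..1}"
    "p = (1-\<delta>)*x + \<delta>*z" "q = (1-\<delta>)*y + \<delta>*w" "Phi a c x y \<le> 0" unfolding Edec_def by blast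
  define l where "l = (p - q') / (p - q)"
  have l: "0 \<le> l" "l \<le> 1" using qq pq unfolding l_def by (auto simp: divide_simps)
  show ?thesis unfolding Edec_def
  proof (rule exI[of _ x], rule exI[of _ z], rule exI[of _ "l*y + (1-l)*x"], rule exI[of _ "l*w + (1-l)*z"], intro conjI)
    show "q' = (1-\<delta>)*(l*y + (1-l)*x) + \<delta>*(l*w + (1-l)*z)" by (rule mix_eq[OF pq l_def xz(5,6)])
    show "Phi a c x (l*y + (1-l)*x) \<le> 0"
      using Phi_mono1[OF a c _ _ _ _ convex_between[OF l] xz(7)] xz by auto
  qed (use xz l unit_between in auto)
qed

lemma Edec_mono':
  assumes a: "1 < a" and d: "0 \<le> \<delta>" "\<delta> \<le> 1"
    and qq: "q \<le> q'" "q' \<le> p" and E: "Edec \<delta> a c q p"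
  shows "Edec \<delta> a c q' p"
proof (cases "p = q")
  case True thus ?thesis using E qq by auto
next
  case pq: False
  from E obtain x z y w where xz: "x \<in> {0..1}" "z \<in> {0..1}" "y \<in> {0..1}" "w \<in> {0..1}"
    "q = (1-\<delta>)*x + \<delta>*z" "p = (1-\<delta>)*y + \<delta>*w" "Phi a c x y \<le> 0" unfolding Edec_def by blast
  define l where "l = (p - q') / (p - q)"
  have l: "0 \<le> l" "l \<le> 1" using qq pq unfolding l_def by (auto simp: divide_simps)
  show ?thesis unfolding Edec_def
  proof (rule exI[of _ "l*x + (1-l)*y"], rule exI[of _ "l*z + (1-l)*w"], rule exI[of _ y], rule exI[of _ w], intro conjI)
    show "q' = (1-\<delta>)*(l*x + (1-l)*y) + \<delta>*(l*z + (1-l)*w)" by (rule mix_eq[OF pq l_def xz(6,5)])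
    show "Phi a c (l*x + (1-l)*y) y \<le> 0"
      using Phi_mono2[OF a _ _ _ _ convex_between[OF l] xz(7)] xz by auto
  qed (use xz l unit_between in auto)
qed



lemma closed_Edec1:
  assumes a: "1 < a"
  shows "closed {t \<in> {0..1}. Edec \<delta> a c t q}"
proof -
  have "closed {t \<in> {0..1}. \<exists>x z y w. x \<in> {0..1} \<and> z \<in> {0..1} \<and> y \<in> {0..1} \<and> w \<in> {0..1}
     \<and> (\<lambda>v. fst v - ((1-\<delta>) * fst (snd v) + \<delta> * fst (snd (snd v)))) (t,x,z,y,w) = 0
     \<and> (\<lambda>v. q - ((1-\<delta>) * fst (snd (snd (snd v))) + \<delta> * snd (snd (snd (snd v))))) (t,x,z,y,w) = 0
     \<and> (\<lambda>v. Phi a c (fst (snd v)) (fst (snd (snd (snd v))))) (t,x,z,y,w) \<le> 0}"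
    by (rule closed_proj) (intro continuous_intros continuous_Phi a)+
  also have "{t \<in> {0..1}. \<exists>x z y w. x \<in> {0..1} \<and> z \<in> {0..1} \<and> y \<in> {0..1} \<and> w \<in> {0..1}
     \<and> (\<lambda>v. fst v - ((1-\<delta>) * fst (snd v) + \<delta> * fst (snd (snd v)))) (t,x,z,y,w) = 0
     \<and> (\<lambda>v. q - ((1-\<delta>) * fst (snd (snd (snd v))) + \<delta> * snd (snd (snd (snd v))))) (t,x,z,y,w) = 0
     \<and> (\<lambda>v. Phi a c (fst (snd v)) (fst (snd (snd (snd v))))) (t,x,z,y,w) \<le> 0}
     = {t \<in> {0..1}. Edec \<delta> a c t q}"
    unfolding Edec_def by simp
  finally show ?thesis .
qed

lemma closed_Edec2:
  assumes a: "1 < a"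
  shows "closed {t \<in> {0..1}. Edec \<delta> a c q t}"
proof -
  have "closed {t \<in> {0..1}. \<exists>x z y w. x \<in> {0..1} \<and> z \<in> {0..1} \<and> y \<in> {0..1} \<and> w \<in> {0..1}
     \<and> (\<lambda>v. q - ((1-\<delta>) * fst (snd v) + \<delta> * fst (snd (snd v)))) (t,x,z,y,w) = 0
     \<and> (\<lambda>v. fst v - ((1-\<delta>) * fst (snd (snd (snd v))) + \<delta> * snd (snd (snd (snd v))))) (t,x,z,y,w) = 0
     \<and> (\<lambda>v. Phi a c (fst (snd v)) (fst (snd (snd (snd v))))) (t,x,z,y,w) \<le> 0}"
    by (rule closed_proj) (intro continuous_intros continuous_Phi a)+
  also have "{t \<in> {0..1}. \<exists>x z y w. x \<in> {0..1} \<and> z \<in> {0..1} \<and> y \<in> {0..1} \<and> w \<in> {0..1}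
     \<and> (\<lambda>v. q - ((1-\<delta>) * fst (snd v) + \<delta> * fst (snd (snd v)))) (t,x,z,y,w) = 0
     \<and> (\<lambda>v. fst v - ((1-\<delta>) * fst (snd (snd (snd v))) + \<delta> * snd (snd (snd (snd v))))) (t,x,z,y,w) = 0
     \<and> (\<lambda>v. Phi a c (fst (snd v)) (fst (snd (snd (snd v))))) (t,x,z,y,w) \<le> 0}
     = {t \<in> {0..1}. Edec \<delta> a c q t}"
    unfolding Edec_def by (simp add: eq_commute[of q] eq_commute[of t])
  finally show ?thesis .
qed

definition Fs :: "real \<Rightarrow> real \<Rightarrow> real \<Rightarrow> real \<Rightarrow> real set" where
  "Fs \<delta> a \<epsilon> q = {p. p \<in> {q..1} \<and>
      approx_renyi_div \<delta> a (bernoulli_pmf p) (bernoulli_pmf q) \<le> ereal \<epsilon> \<and>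
      approx_renyi_div \<delta> a (bernoulli_pmf q) (bernoulli_pmf p) \<le> ereal \<epsilon>}"

locale prm =
  fixes a \<epsilon> \<delta> :: real
  assumes a: "1 < a" and e: "0 < \<epsilon>" and d0: "0 \<le> \<delta>" and d1: "\<delta> < 1"
begin

abbreviation "cc \<equiv> exp ((a-1)*\<epsilon>)"

lemma cc1: "1 \<le> cc" using a e by simp

lemma Fs_eq:
  assumes q: "0 \<le> q" "q \<le> 1"
  shows "Fs \<delta> a \<epsilon> q = {q..1} \<inter> {t \<in> {0..1}. Edec \<delta> a cc t q} \<inter> {t \<in> {0..1}. Edec \<delta> a cc q t}"
  unfolding Fs_def using approx_ber_le[OF a _ d0 d1, of \<epsilon>] e q by auto

lemma Fs_compact: "0 \<le> q \<Longrightarrow> q \<le> 1 \<Longrightarrow> compact (Fs \<delta> a \<epsilon> q)"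
  unfolding Fs_eq
  by (intro compact_Int_closed compact_Icc closed_Edec1 closed_Edec2 a)

lemma Fs_self: "0 \<le> q \<Longrightarrow> q \<le> 1 \<Longrightarrow> q \<in> Fs \<delta> a \<epsilon> q"
proof -
  assume q: "0 \<le> q" "q \<le> 1"
  have "Edec \<delta> a cc q q" unfolding Edec_def
    by (rule exI[of _ q], rule exI[of _ q], rule exI[of _ q], rule exI[of _ q])
       (use q Phi_self[OF _ _ cc1 a] in \<open>auto simp: algebra_simps\<close>)
  thus ?thesis unfolding Fs_eq[OF q] using q by auto
qed

lemma L_props:
  assumes q: "0 \<le> q" "q \<le> 1"
  shows "L_step \<delta> a \<epsilon> q \<in> Fs \<delta> a \<epsilon> q" "\<And>p. p \<in> Fs \<delta> a \<epsilon> q \<Longrightarrow> p \<le> L_step \<delta> a \<epsilon> q"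
proof -
  obtain s where s: "s \<in> Fs \<delta> a \<epsilon> q" "\<forall>t\<in>Fs \<delta> a \<epsilon> q. t \<le> s"
    using compact_attains_sup[OF Fs_compact[OF q]] Fs_self[OF q] by blast
  have L: "L_step \<delta> a \<epsilon> q = s" unfolding L_step_def
    by (rule Greatest_equality) (use s in \<open>auto simp: Fs_def\<close>)
  show "L_step \<delta> a \<epsilon> q \<in> Fs \<delta> a \<epsilon> q" "\<And>p. p \<in> Fs \<delta> a \<epsilon> q \<Longrightarrow> p \<le> L_step \<delta> a \<epsilon> q"
    using s L by auto
qed

lemma Fs_mono:
  assumes q: "0 \<le> q" "q \<le> q'" and p: "q' < p" "p \<in> Fs \<delta> a \<epsilon> q"
  shows "p \<in> Fs \<delta> a \<epsilon> q'"
proof -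
  have p1: "p \<le> 1" using p unfolding Fs_def by auto
  have q'1: "q' \<le> 1" using p1 p by auto
  have "Edec \<delta> a cc p q" "Edec \<delta> a cc q p" using p unfolding Fs_eq[OF q(1) order.trans[OF q(2) q'1]] by auto
  hence "Edec \<delta> a cc p q'" "Edec \<delta> a cc q' p"
    using Edec_mono[OF a cc1, of \<delta> q q' p] Edec_mono'[OF a, of \<delta> q q' p cc] d0 d1 q p by auto
  thus ?thesis unfolding Fs_eq[OF order.trans[OF q] q'1] using p p1 q by auto
qed

end



lemma mix_map:
  assumes "\<forall>x. pmf A x = (1-\<delta>) * pmf A1 x + \<delta> * pmf A2 x"
  shows "pmf (map_pmf g A) y = (1-\<delta>) * pmf (map_pmf g A1) y + \<delta> * pmf (map_pmf g A2) y"
proof -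
  have "pmf (map_pmf g A) y = infsetsum (pmf A) (g -` {y})" by (simp add: pmf_map measure_pmf_conv_infsetsum)
  also have "\<dots> = infsetsum (\<lambda>x. (1-\<delta>) * pmf A1 x + \<delta> * pmf A2 x) (g -` {y})"
    using assms by (intro infsetsum_cong) auto
  also have "\<dots> = (1-\<delta>) * infsetsum (pmf A1) (g -` {y}) + \<delta> * infsetsum (pmf A2) (g -` {y})"
  proof -
    have 1: "infsetsum (\<lambda>x. (1-\<delta>) * pmf A1 x) (g -` {y}) = (1-\<delta>) * infsetsum (pmf A1) (g -` {y})"
      by (rule infsetsum_cmult_right) (rule pmf_abs_summable)
    have 2: "infsetsum (\<lambda>x. \<delta> * pmf A2 x) (g -` {y}) = \<delta> * infsetsum (pmf A2) (g -` {y})"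
      by (rule infsetsum_cmult_right) (rule pmf_abs_summable)
    show ?thesis by (subst infsetsum_add) (auto simp: 1 2)
  qed
  also have "\<dots> = (1-\<delta>) * pmf (map_pmf g A1) y + \<delta> * pmf (map_pmf g A2) y"
    by (simp add: pmf_map measure_pmf_conv_infsetsum)
  finally show ?thesis .
qed

lemma mix_pair:
  assumes "\<forall>x. pmf A x = (1-\<delta>) * pmf A1 x + \<delta> * pmf A2 x"
  shows "pmf (pair_pmf A R) y = (1-\<delta>) * pmf (pair_pmf A1 R) y + \<delta> * pmf (pair_pmf A2 R) y"
proof -
  obtain u r where y: "y = (u, r)" by (cases y)
  have e: "pmf A u = (1-\<delta>)*pmf A1 u + \<delta>*pmf A2 u" using assms by blast
  show ?thesis unfolding y pmf_pair e by (simp add: algebra_simps)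
qed

lemma renyi_fin:
  assumes F: "finite F" "set_pmf P \<subseteq> F"
  shows "renyi_div a P Q = (if set_pmf P \<subseteq> set_pmf Q then
     ereal (1/(a-1) * ln (\<Sum>x\<in>F. pmf P x powr a * pmf Q x powr (1-a))) else \<infinity>)"
proof -
  define f where "f = (\<lambda>x. pmf P x powr a * pmf Q x powr (1-a))"
  have z: "f x = 0" if "x \<notin> F" for x
  proof -
    have "pmf P x = 0" using that F by (auto simp: set_pmf_eq)
    thus ?thesis unfolding f_def by simp
  qed
  have s: "f summable_on UNIV"
    using summable_on_cong_neutral[of F UNIV f f] z F by auto
  have i: "infsum f UNIV = sum f F"
    using infsum_cong_neutral[of F UNIV f f] z F by auto
  show ?thesis unfolding renyi_div_def using s i unfolding f_def by simp
qed

lemma pmf_map_inj_F: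
  assumes "inj_on h F" "set_pmf A \<subseteq> F" "x \<in> F"
  shows "pmf (map_pmf h A) (h x) = pmf A x"
proof (cases "x \<in> set_pmf A")
  case True thus ?thesis using pmf_map_inj[of h A x] assms inj_on_subset by blast
next
  case False
  hence "h x \<notin> h ` set_pmf A" using assms by (meson inj_on_image_mem_iff)
  thus ?thesis using False by (simp add: pmf_map_outside set_pmf_eq)
qed

lemma renyi_map_inj:
  assumes fin: "finite (set_pmf A)" "finite (set_pmf B)" and inj: "inj_on h (set_pmf A \<union> set_pmf B)"
  shows "renyi_div a (map_pmf h A) (map_pmf h B) = renyi_div a A B"
proof -
  define F where "F = set_pmf A \<union> set_pmf B"
  have F: "finite F" "set_pmf A \<subseteq> F" "set_pmf B \<subseteq> F" using fin unfolding F_def by auto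
  have sub: "h ` set_pmf A \<subseteq> h ` set_pmf B \<longleftrightarrow> set_pmf A \<subseteq> set_pmf B"
    using inj by (rule inj_on_image_subset_iff) auto
  have sum: "(\<Sum>y\<in>h ` F. pmf (map_pmf h A) y powr a * pmf (map_pmf h B) y powr (1-a))
      = (\<Sum>x\<in>F. pmf A x powr a * pmf B x powr (1-a))"
    using inj F unfolding F_def
    by (subst sum.reindex) (auto simp: pmf_map_inj_F[of h "set_pmf A \<union> set_pmf B"])
  have "set_pmf (map_pmf h A) \<subseteq> h ` F" using F by auto
  note r1 = renyi_fin[OF _ this, of a "map_pmf h B"]
  show ?thesis
    using r1 renyi_fin[of F A a B] F sub sum by auto
qed

lemma renyi_pair:
  assumes fin: "finite (set_pmf A)" "finite (set_pmf B)" "finite (set_pmf R)"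
  shows "renyi_div a (pair_pmf A R) (pair_pmf B R) = renyi_div a A B"
proof -
  define G where "G = set_pmf A \<union> set_pmf B"
  have G: "finite G" "set_pmf A \<subseteq> G" using fin unfolding G_def by auto
  have sub: "set_pmf A \<times> set_pmf R \<subseteq> set_pmf B \<times> set_pmf R \<longleftrightarrow> set_pmf A \<subseteq> set_pmf B"
    using set_pmf_not_empty[of R] by auto
  have "(\<Sum>v\<in>G \<times> set_pmf R. pmf (pair_pmf A R) v powr a * pmf (pair_pmf B R) v powr (1-a))
      = (\<Sum>u\<in>G. \<Sum>r\<in>set_pmf R. (pmf A u powr a * pmf B u powr (1-a)) * pmf R r)"
  proof -
    have "(\<Sum>v\<in>G \<times> set_pmf R. pmf (pair_pmf A R) v powr a * pmf (pair_pmf B R) v powr (1-a))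
        = (\<Sum>u\<in>G. \<Sum>r\<in>set_pmf R. pmf (pair_pmf A R) (u,r) powr a * pmf (pair_pmf B R) (u,r) powr (1-a))"
      by (simp add: sum.cartesian_product split_def)
    also have "\<dots> = (\<Sum>u\<in>G. \<Sum>r\<in>set_pmf R. (pmf A u powr a * pmf B u powr (1-a)) * pmf R r)"
    proof (intro sum.cong refl)
      fix u r assume r: "r \<in> set_pmf R"
      hence R: "0 < pmf R r" by (simp add: pmf_positive)
      have "pmf R r powr a * pmf R r powr (1-a) = pmf R r"
        using R by (simp add: powr_add[symmetric])
      thus "pmf (pair_pmf A R) (u,r) powr a * pmf (pair_pmf B R) (u,r) powr (1-a)
          = (pmf A u powr a * pmf B u powr (1-a)) * pmf R r"
        unfolding pmf_pair by (simp add: powr_mult algebra_simps)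
    qed
    finally show ?thesis .
  qed
  also have "\<dots> = (\<Sum>u\<in>G. pmf A u powr a * pmf B u powr (1-a))"
    by (simp add: sum_distrib_left[symmetric] sum_pmf_eq_1 fin)
  finally have sum: "(\<Sum>v\<in>G \<times> set_pmf R. pmf (pair_pmf A R) v powr a * pmf (pair_pmf B R) v powr (1-a))
      = (\<Sum>u\<in>G. pmf A u powr a * pmf B u powr (1-a))" .
  have "set_pmf (pair_pmf A R) \<subseteq> G \<times> set_pmf R" using G by auto
  note r1 = renyi_fin[OF _ this, of a "pair_pmf B R"]
  have sub': "set_pmf (pair_pmf A R) \<subseteq> set_pmf (pair_pmf B R) \<longleftrightarrow> set_pmf A \<subseteq> set_pmf B"
    using sub by simp
  show ?thesis
    using r1 renyi_fin[of G A a B] G fin sub' sum unfolding sub' by (simp del: set_pair_pmf)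
qed

lemma supp_dec:
  assumes d: "0 \<le> \<delta>" "\<delta> < 1" and P: "\<forall>x. pmf P x = (1-\<delta>) * pmf P1 x + \<delta> * pmf P2 x"
  shows "set_pmf P1 \<subseteq> set_pmf P" "0 < \<delta> \<Longrightarrow> set_pmf P2 \<subseteq> set_pmf P"
proof -
  have z: "pmf P1 x = 0 \<and> (0 < \<delta> \<longrightarrow> pmf P2 x = 0)" if "pmf P x = 0" for x
  proof -
    have "(1-\<delta>) * pmf P1 x + \<delta> * pmf P2 x = 0" using P that by simp
    moreover have "0 \<le> (1-\<delta>) * pmf P1 x" "0 \<le> \<delta> * pmf P2 x" using d by auto
    ultimately have "(1-\<delta>) * pmf P1 x = 0" "\<delta> * pmf P2 x = 0" by linarith+
    thus ?thesis using d by auto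
  qed
  show "set_pmf P1 \<subseteq> set_pmf P" using z by (auto simp: set_pmf_eq)
  show "0 < \<delta> \<Longrightarrow> set_pmf P2 \<subseteq> set_pmf P" using z by (auto simp: set_pmf_eq)
qed



lemma finite_bool_pmf: "finite (set_pmf (P :: bool pmf))"
  by (rule finite_subset[OF subset_UNIV]) simp

lemma approx_map_pair_le:
  fixes A B :: "bool pmf" and R :: "'r pmf" and g :: "bool \<times> 'r \<Rightarrow> 'b"
  assumes d: "0 \<le> \<delta>" "\<delta> < 1" and finR: "finite (set_pmf R)" and inj: "inj_on g (UNIV \<times> set_pmf R)"
  shows "approx_renyi_div \<delta> a (map_pmf g (pair_pmf A R)) (map_pmf g (pair_pmf B R)) \<le> approx_renyi_div \<delta> a A B"
  unfolding approx_renyi_div_def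
proof (rule Inf_mono)
  fix b assume "b \<in> {renyi_div a P' Q' |P' P'' Q' Q''.
            (\<forall>x. pmf A x = (1 - \<delta>) * pmf P' x + \<delta> * pmf P'' x) \<and>
            (\<forall>x. pmf B x = (1 - \<delta>) * pmf Q' x + \<delta> * pmf Q'' x)}"
  then obtain P' P'' Q' Q'' where b: "b = renyi_div a P' Q'"
    and dA: "\<forall>x. pmf A x = (1 - \<delta>) * pmf P' x + \<delta> * pmf P'' x"
    and dB: "\<forall>x. pmf B x = (1 - \<delta>) * pmf Q' x + \<delta> * pmf Q'' x" by blast
  have v: "renyi_div a (map_pmf g (pair_pmf P' R)) (map_pmf g (pair_pmf Q' R)) = renyi_div a P' Q'"
  proof -
    have "renyi_div a (map_pmf g (pair_pmf P' R)) (map_pmf g (pair_pmf Q' R)) = renyi_div a (pair_pmf P' R) (pair_pmf Q' R)"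
      by (rule renyi_map_inj) (auto intro: finite_bool_pmf finR inj_on_subset[OF inj])
    also have "\<dots> = renyi_div a P' Q'" by (rule renyi_pair) (auto intro: finite_bool_pmf finR)
    finally show ?thesis .
  qed
  show "\<exists>x\<in>{renyi_div a P' Q' |P' P'' Q' Q''.
            (\<forall>x. pmf (map_pmf g (pair_pmf A R)) x = (1 - \<delta>) * pmf P' x + \<delta> * pmf P'' x) \<and>
            (\<forall>x. pmf (map_pmf g (pair_pmf B R)) x = (1 - \<delta>) * pmf Q' x + \<delta> * pmf Q'' x)}. x \<le> b"
  proof (rule bexI[of _ "renyi_div a (map_pmf g (pair_pmf P' R)) (map_pmf g (pair_pmf Q' R))"])
    show "renyi_div a (map_pmf g (pair_pmf P' R)) (map_pmf g (pair_pmf Q' R)) \<le> b" using v b by simp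
    have "\<forall>x. pmf (pair_pmf A R) x = (1 - \<delta>) * pmf (pair_pmf P' R) x + \<delta> * pmf (pair_pmf P'' R) x"
      using mix_pair[OF dA] by blast
    note 1 = mix_map[OF this, of g]
    have "\<forall>x. pmf (pair_pmf B R) x = (1 - \<delta>) * pmf (pair_pmf Q' R) x + \<delta> * pmf (pair_pmf Q'' R) x"
      using mix_pair[OF dB] by blast
    note 2 = mix_map[OF this, of g]
    show "renyi_div a (map_pmf g (pair_pmf P' R)) (map_pmf g (pair_pmf Q' R)) \<in> {renyi_div a P' Q' |P' P'' Q' Q''.
            (\<forall>x. pmf (map_pmf g (pair_pmf A R)) x = (1 - \<delta>) * pmf P' x + \<delta> * pmf P'' x) \<and>
            (\<forall>x. pmf (map_pmf g (pair_pmf B R)) x = (1 - \<delta>) * pmf Q' x + \<delta> * pmf Q'' x)}"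
      using 1 2 by blast
  qed
qed

lemma pull_dec:
  fixes A :: "bool pmf" and h :: "bool \<Rightarrow> 'b"
  assumes inj: "inj h" and d: "0 \<le> \<delta>" "\<delta> < 1"
    and dec: "\<forall>y. pmf (map_pmf h A) y = (1-\<delta>) * pmf P1 y + \<delta> * pmf P2 y"
  shows "\<forall>x. pmf A x = (1-\<delta>) * pmf (map_pmf (inv h) P1) x + \<delta> * pmf (map_pmf (inv h) P2) x"
    "map_pmf h (map_pmf (inv h) P1) = P1"
proof -
  have bk: "map_pmf h (map_pmf (inv h) P) = P" if "set_pmf P \<subseteq> range h" for P :: "'b pmf"
  proof -
    have "map_pmf h (map_pmf (inv h) P) = map_pmf (\<lambda>x. x) P"
      unfolding map_pmf_comp by (rule map_pmf_cong) (use that in \<open>auto simp: f_inv_into_f\<close>)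
    thus ?thesis by simp
  qed
  have s1: "set_pmf P1 \<subseteq> range h" using supp_dec(1)[OF d dec] by auto
  show b1: "map_pmf h (map_pmf (inv h) P1) = P1" by (rule bk[OF s1])
  show "\<forall>x. pmf A x = (1-\<delta>) * pmf (map_pmf (inv h) P1) x + \<delta> * pmf (map_pmf (inv h) P2) x"
  proof
    fix x
    have "pmf A x = pmf (map_pmf h A) (h x)" by (simp add: pmf_map_inj'[OF inj])
    also have "\<dots> = (1-\<delta>) * pmf P1 (h x) + \<delta> * pmf P2 (h x)" using dec by blast
    also have "pmf P1 (h x) = pmf (map_pmf (inv h) P1) x"
      by (subst b1[symmetric]) (simp add: pmf_map_inj'[OF inj])
    also have "\<delta> * pmf P2 (h x) = \<delta> * pmf (map_pmf (inv h) P2) x"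
    proof (cases "\<delta> = 0")
      case False
      hence "set_pmf P2 \<subseteq> range h" using supp_dec(2)[OF d dec] d by auto
      hence b2: "map_pmf h (map_pmf (inv h) P2) = P2" by (rule bk)
      show ?thesis by (subst b2[symmetric]) (simp add: pmf_map_inj'[OF inj])
    qed simp
    finally show "pmf A x = (1-\<delta>) * pmf (map_pmf (inv h) P1) x + \<delta> * pmf (map_pmf (inv h) P2) x" .
  qed
qed

lemma approx_map_inj_ge:
  fixes A B :: "bool pmf" and h :: "bool \<Rightarrow> 'b"
  assumes inj: "inj h" and d: "0 \<le> \<delta>" "\<delta> < 1"
  shows "approx_renyi_div \<delta> a A B \<le> approx_renyi_div \<delta> a (map_pmf h A) (map_pmf h B)"
  unfolding approx_renyi_div_def
proof (rule Inf_mono)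
  fix b assume "b \<in> {renyi_div a P' Q' |P' P'' Q' Q''.
            (\<forall>x. pmf (map_pmf h A) x = (1 - \<delta>) * pmf P' x + \<delta> * pmf P'' x) \<and>
            (\<forall>x. pmf (map_pmf h B) x = (1 - \<delta>) * pmf Q' x + \<delta> * pmf Q'' x)}"
  then obtain P' P'' Q' Q'' where b: "b = renyi_div a P' Q'"
    and dA: "\<forall>x. pmf (map_pmf h A) x = (1 - \<delta>) * pmf P' x + \<delta> * pmf P'' x"
    and dB: "\<forall>x. pmf (map_pmf h B) x = (1 - \<delta>) * pmf Q' x + \<delta> * pmf Q'' x" by blast
  note pA = pull_dec[OF inj d dA] and pB = pull_dec[OF inj d dB]
  have v: "renyi_div a (map_pmf (inv h) P') (map_pmf (inv h) Q') = renyi_div a P' Q'"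
  proof -
    have "renyi_div a (map_pmf h (map_pmf (inv h) P')) (map_pmf h (map_pmf (inv h) Q')) = renyi_div a (map_pmf (inv h) P') (map_pmf (inv h) Q')"
      by (rule renyi_map_inj) (auto intro: finite_bool_pmf inj_on_subset[OF inj])
    thus ?thesis using pA(2) pB(2) by simp
  qed
  show "\<exists>x\<in>{renyi_div a P' Q' |P' P'' Q' Q''.
            (\<forall>x. pmf A x = (1 - \<delta>) * pmf P' x + \<delta> * pmf P'' x) \<and>
            (\<forall>x. pmf B x = (1 - \<delta>) * pmf Q' x + \<delta> * pmf Q'' x)}. x \<le> b"
  proof (rule bexI[of _ "renyi_div a (map_pmf (inv h) P') (map_pmf (inv h) Q')"])
    show "renyi_div a (map_pmf (inv h) P') (map_pmf (inv h) Q') \<le> b" using v b by simp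
    show "renyi_div a (map_pmf (inv h) P') (map_pmf (inv h) Q') \<in> {renyi_div a P' Q' |P' P'' Q' Q''.
            (\<forall>x. pmf A x = (1 - \<delta>) * pmf P' x + \<delta> * pmf P'' x) \<and>
            (\<forall>x. pmf B x = (1 - \<delta>) * pmf Q' x + \<delta> * pmf Q'' x)}"
      using pA(1) pB(1) by blast
  qed
qed



definition gg :: "'u \<Rightarrow> bool \<times> ('u \<Rightarrow> bool) \<Rightarrow> 'u set" where
  "gg u0 = (\<lambda>(b,f). {u. (f(u0 := b)) u})"

lemma ber0: "bernoulli_pmf 0 = return_pmf False"
  by (rule pmf_eqI) (case_tac i, auto)

lemma psp_split:
  assumes fin: "finite {u. X u \<noteq> 0}" and pi0: "\<pi> 0 = 0"
  shows "psp_mech \<pi> X = map_pmf (gg u0) (pair_pmf (bernoulli_pmf (\<pi> (X u0)))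
            (Pi_pmf ({u. X u \<noteq> 0} - {u0}) False (\<lambda>u. bernoulli_pmf (\<pi> (X u)))))"
proof -
  define T where "T = {u. X u \<noteq> 0} - {u0}"
  define p where "p = (\<lambda>u. bernoulli_pmf (\<pi> (X u)))"
  have T: "finite T" "u0 \<notin> T" using fin unfolding T_def by auto
  have setR: "f u0 = False" if "f \<in> set_pmf (Pi_pmf T False p)" for f
    using set_Pi_pmf_subset[OF T(1), of False p] that T(2) by auto
  show ?thesis
  proof (cases "X u0 = 0")
    case True
    hence S: "{u. X u \<noteq> 0} = T" unfolding T_def by auto
    have "map_pmf (gg u0) (pair_pmf (bernoulli_pmf (\<pi> (X u0))) (Pi_pmf T False p))
        = map_pmf (\<lambda>f. gg u0 (False, f)) (Pi_pmf T False p)"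
      using True pi0 by (simp add: ber0 pair_return_pmf1 map_pmf_comp)
    also have "\<dots> = map_pmf (\<lambda>b. {u. b u}) (Pi_pmf T False p)"
      by (rule map_pmf_cong[OF refl]) (auto simp: gg_def setR fun_upd_idem)
    moreover have "T - {u0} = T" using T(2) by auto
    ultimately show ?thesis unfolding psp_mech_def S p_def[symmetric] by simp
  next
    case False
    hence S: "{u. X u \<noteq> 0} = insert u0 T" unfolding T_def by auto
    have "Pi_pmf (insert u0 T) False p = map_pmf (\<lambda>(y,f). f(u0:=y)) (pair_pmf (p u0) (Pi_pmf T False p))"
      by (rule Pi_pmf_insert[OF T])
    hence "psp_mech \<pi> X = map_pmf (\<lambda>x. {u. (case x of (y,f) \<Rightarrow> f(u0:=y)) u}) (pair_pmf (p u0) (Pi_pmf T False p))"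
      unfolding psp_mech_def S p_def[symmetric] by (simp add: map_pmf_comp)
    also have "(\<lambda>x. {u. (case x of (y,f) \<Rightarrow> f(u0:=y)) u}) = gg u0"
      by (auto simp: gg_def fun_eq_iff split: prod.splits)
    finally show ?thesis unfolding T_def[symmetric] p_def by simp
  qed
qed

lemma gg_inj:
  assumes T: "finite T" "u0 \<notin> T"
  shows "inj_on (gg u0) (UNIV \<times> set_pmf (Pi_pmf T False p))"
proof (rule inj_onI)
  fix x y assume x: "x \<in> UNIV \<times> set_pmf (Pi_pmf T False p)" and y: "y \<in> UNIV \<times> set_pmf (Pi_pmf T False p)"
    and e: "gg u0 x = gg u0 y"
  obtain b f where xb: "x = (b, f)" by (cases x)
  obtain b' f' where yb: "y = (b', f')" by (cases y)
  have f: "f u = False" "f' u = False" if "u \<notin> T" for u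
    using set_Pi_pmf_subset[OF T(1), of False p] x y that unfolding xb yb by auto
  have e': "(f(u0 := b)) u = (f'(u0 := b')) u" for u
    using e unfolding xb yb gg_def by (auto simp: set_eq_iff)
  have "b = b'" using e'[of u0] by simp
  moreover have "f = f'"
  proof
    fix u show "f u = f' u"
      using e'[of u] f[of u0] T(2) by (cases "u = u0") auto
  qed
  ultimately show "x = y" unfolding xb yb by simp
qed

lemma fin_Pi: "finite T \<Longrightarrow> finite (set_pmf (Pi_pmf T False (p :: 'u \<Rightarrow> bool pmf)))"
  by (rule finite_subset[OF set_Pi_pmf_subset']) (auto intro!: finite_PiE_dflt)



lemma neighbors_struct:
  assumes "dataset U X" "dataset U X'" "l1_neighbors 1 X X'"
  shows "\<exists>u0. (\<forall>u. u \<noteq> u0 \<longrightarrow> X u = X' u) \<and> (X' u0 = X u0 \<or> X' u0 = Suc (X u0) \<or> X u0 = Suc (X' u0))"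
proof (cases "\<forall>u. X u = X' u")
  case True thus ?thesis by auto
next
  case False
  then obtain u0 where u0: "X u0 \<noteq> X' u0" by auto
  define S where "S = {u. X u \<noteq> 0} \<union> {u. X' u \<noteq> 0}"
  define d where "d u = \<bar>int (X u) - int (X' u)\<bar>" for u
  have S: "finite S" using assms(1,2) unfolding S_def dataset_def by auto
  have le: "sum d S \<le> 1" using assms(3) unfolding l1_neighbors_def S_def d_def by simp
  have u0S: "u0 \<in> S" using u0 unfolding S_def by auto
  have "sum d S = d u0 + sum d (S - {u0})" using S u0S by (simp add: sum.remove)
  moreover have "d u0 \<ge> 1" using u0 unfolding d_def by auto
  moreover have nn: "sum d (S - {u0}) \<ge> 0" unfolding d_def by (intro sum_nonneg) auto
  ultimately have s0: "sum d (S - {u0}) = 0" and d1: "d u0 = 1" using le by linarith+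
  have z: "\<forall>u\<in>S - {u0}. d u = 0" using s0 S by (subst sum_nonneg_eq_0_iff[symmetric]) (auto simp: d_def)
  have "\<forall>u. u \<noteq> u0 \<longrightarrow> X u = X' u"
  proof (intro allI impI)
    fix u assume "u \<noteq> u0"
    show "X u = X' u"
    proof (cases "u \<in> S")
      case True thus ?thesis using z \<open>u \<noteq> u0\<close> unfolding d_def by auto
    next
      case False thus ?thesis unfolding S_def by auto
    qed
  qed
  moreover have "X' u0 = Suc (X u0) \<or> X u0 = Suc (X' u0)" using d1 unfolding d_def by linarith
  ultimately show ?thesis by blast
qed

lemma pistar_props:
  assumes "prm a \<epsilon> \<delta>"
  shows "0 \<le> pi_star \<delta> a \<epsilon> n \<and> pi_star \<delta> a \<epsilon> n \<le> 1"
proof (induction n)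
  case 0 thus ?case by simp
next
  case (Suc n)
  interpret prm a \<epsilon> \<delta> by (rule assms)
  have "pi_star \<delta> a \<epsilon> (Suc n) \<in> Fs \<delta> a \<epsilon> (pi_star \<delta> a \<epsilon> n)" using L_props(1) Suc by simp
  thus ?case using Suc unfolding Fs_def by auto
qed

lemma upper:
  assumes P: "prm a \<epsilon> \<delta>" and psp: "partition_selection_primitive \<pi>"
    and fX: "finite {u. X u \<noteq> 0}" and fX': "finite {u. X' u \<noteq> 0}"
    and agree: "\<forall>u. u \<noteq> u0 \<longrightarrow> X u = X' u"
    and B: "approx_renyi_div \<delta> a (bernoulli_pmf (\<pi> (X u0))) (bernoulli_pmf (\<pi> (X' u0))) \<le> ereal \<epsilon>"
  shows "approx_renyi_div \<delta> a (psp_mech \<pi> X) (psp_mech \<pi> X') \<le> ereal \<epsilon>"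
proof -
  interpret prm a \<epsilon> \<delta> by (rule P)
  define T where "T = {u. X u \<noteq> 0} - {u0}"
  have T': "T = {u. X' u \<noteq> 0} - {u0}" unfolding T_def using agree by auto
  have T: "finite T" "u0 \<notin> T" using fX unfolding T_def by auto
  define R where "R = Pi_pmf T False (\<lambda>u. bernoulli_pmf (\<pi> (X u)))"
  have R': "Pi_pmf T False (\<lambda>u. bernoulli_pmf (\<pi> (X' u))) = R"
    unfolding R_def by (rule Pi_pmf_cong) (use agree T(2) in auto)
  have pi0: "\<pi> 0 = 0" using psp unfolding partition_selection_primitive_def by auto
  have m1: "psp_mech \<pi> X = map_pmf (gg u0) (pair_pmf (bernoulli_pmf (\<pi> (X u0))) R)"
    using psp_split[of X \<pi> u0, OF fX pi0] unfolding R_def T_def by simp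
  have m2: "psp_mech \<pi> X' = map_pmf (gg u0) (pair_pmf (bernoulli_pmf (\<pi> (X' u0))) R)"
    using psp_split[of X' \<pi> u0, OF fX' pi0] R' unfolding T' by simp
  have "approx_renyi_div \<delta> a (psp_mech \<pi> X) (psp_mech \<pi> X') \<le>
        approx_renyi_div \<delta> a (bernoulli_pmf (\<pi> (X u0))) (bernoulli_pmf (\<pi> (X' u0)))"
    unfolding m1 m2 R_def
    by (rule approx_map_pair_le[OF d0 d1 fin_Pi[OF T(1)] gg_inj[OF T]])
  thus ?thesis using B by simp
qed



lemma single_mech:
  assumes pi0: "\<pi> 0 = 0"
  shows "psp_mech \<pi> (\<lambda>v. if v = u then m else 0) = map_pmf (\<lambda>b. gg u (b, \<lambda>_. False)) (bernoulli_pmf (\<pi> m))"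
proof -
  have f: "finite {v. (if v = u then m else 0) \<noteq> (0::nat)}"
    by (rule finite_subset[of _ "{u}"]) auto
  have e: "{v. (if v = u then m else 0) \<noteq> (0::nat)} - {u} = {}" by auto
  show ?thesis
    using psp_split[of "\<lambda>v. if v = u then m else 0" \<pi> u, OF f pi0] unfolding e
    by (simp add: pair_return_pmf2 map_pmf_comp)
qed

lemma single_inj: "inj (\<lambda>b. gg u (b, \<lambda>_. False))"
proof (rule injI)
  fix b b' assume "gg u (b, \<lambda>_. False) = gg u (b', \<lambda>_. False)"
  hence "(u \<in> gg u (b, \<lambda>_. False)) = (u \<in> gg u (b', \<lambda>_. False))" by simp
  thus "b = b'" unfolding gg_def by simp
qed

theorem mainTheorem3:
  fixes U :: "'u set" and \<alpha> \<epsilon> \<delta> :: real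
  assumes "U \<noteq> {}" and "\<alpha> > 1" and "\<epsilon> > 0" and "0 \<le> \<delta>" and "\<delta> < 1"
  shows "partition_selection_primitive (pi_star \<delta> \<alpha> \<epsilon>)
       \<and> psp_rdp U \<delta> \<alpha> \<epsilon> 1 (pi_star \<delta> \<alpha> \<epsilon>)
       \<and> (\<forall>\<pi>. partition_selection_primitive \<pi> \<and> psp_rdp U \<delta> \<alpha> \<epsilon> 1 \<pi>
              \<longrightarrow> (\<forall>n. \<pi> n \<le> pi_star \<delta> \<alpha> \<epsilon> n))"
proof -
  have P: "prm \<alpha> \<epsilon> \<delta>" by unfold_locales (use assms in auto)
  interpret prm \<alpha> \<epsilon> \<delta> by (rule P)
  have range: "0 \<le> pi_star \<delta> \<alpha> \<epsilon> n" "pi_star \<delta> \<alpha> \<epsilon> n \<le> 1" for n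
    using pistar_props[OF P, of n] by auto
  have psp: "partition_selection_primitive (pi_star \<delta> \<alpha> \<epsilon>)"
    unfolding partition_selection_primitive_def using range by simp
  have rdp: "psp_rdp U \<delta> \<alpha> \<epsilon> 1 (pi_star \<delta> \<alpha> \<epsilon>)"
    unfolding psp_rdp_def
  proof (intro allI impI, elim conjE)
    fix X X' :: "'u \<Rightarrow> nat"
    assume X: "dataset U X" "dataset U X'" "l1_neighbors 1 X X'"
    obtain u0 where u0: "\<forall>u. u \<noteq> u0 \<longrightarrow> X u = X' u"
      "X' u0 = X u0 \<or> X' u0 = Suc (X u0) \<or> X u0 = Suc (X' u0)"
      using neighbors_struct[OF X] by blast
    have B: "approx_renyi_div \<delta> \<alpha> (bernoulli_pmf (pi_star \<delta> \<alpha> \<epsilon> (X u0))) (bernoulli_pmf (pi_star \<delta> \<alpha> \<epsilon> (X' u0))) \<le> ereal \<epsilon>"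
    proof -
      consider "X' u0 = X u0" | "X' u0 = Suc (X u0)" | "X u0 = Suc (X' u0)" using u0(2) by blast
      thus ?thesis
      proof cases
        case 1 thus ?thesis using Fs_self[OF range(1,2)] unfolding Fs_def by auto
      next
        case 2 thus ?thesis using L_props(1)[OF range(1,2), of "X u0"] unfolding Fs_def by auto
      next
        case 3 thus ?thesis using L_props(1)[OF range(1,2), of "X' u0"] unfolding Fs_def by auto
      qed
    qed
    show "approx_renyi_div \<delta> \<alpha> (psp_mech (pi_star \<delta> \<alpha> \<epsilon>) X) (psp_mech (pi_star \<delta> \<alpha> \<epsilon>) X') \<le> ereal \<epsilon>"
      by (rule upper[OF P psp _ _ u0(1) B]) (use X in \<open>auto simp: dataset_def\<close>)
  qed
  have opt: "\<pi> n \<le> pi_star \<delta> \<alpha> \<epsilon> n"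
    if pp: "partition_selection_primitive \<pi>" and pr: "psp_rdp U \<delta> \<alpha> \<epsilon> 1 \<pi>" for \<pi> n
  proof -
    obtain u where u: "u \<in> U" using assms(1) by blast
    define Xm where "Xm m = (\<lambda>v. if v = u then m else (0::nat))" for m
    have ds: "dataset U (Xm m)" for m
      unfolding dataset_def Xm_def using u by (auto intro: finite_subset[of _ "{u}"])
    have nb: "l1_neighbors 1 (Xm (Suc m)) (Xm m)" "l1_neighbors 1 (Xm m) (Xm (Suc m))" for m
    proof -
      have "{v. Xm (Suc m) v \<noteq> 0} \<union> {v. Xm m v \<noteq> 0} = {u}" "{v. Xm m v \<noteq> 0} \<union> {v. Xm (Suc m) v \<noteq> 0} = {u}"
        unfolding Xm_def by auto
      thus "l1_neighbors 1 (Xm (Suc m)) (Xm m)" "l1_neighbors 1 (Xm m) (Xm (Suc m))"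
        unfolding l1_neighbors_def by (auto simp: Xm_def)
    qed
    have pi0: "\<pi> 0 = 0" and pi1: "\<And>k. 0 \<le> \<pi> k \<and> \<pi> k \<le> 1"
      using pp unfolding partition_selection_primitive_def by auto
    have mech: "psp_mech \<pi> (Xm m) = map_pmf (\<lambda>b. gg u (b, \<lambda>_. False)) (bernoulli_pmf (\<pi> m))" for m
      unfolding Xm_def by (rule single_mech[of \<pi>, OF pi0])
    have bb: "approx_renyi_div \<delta> \<alpha> (bernoulli_pmf (\<pi> m1)) (bernoulli_pmf (\<pi> m2)) \<le> ereal \<epsilon>"
      if "l1_neighbors 1 (Xm m1) (Xm m2)" for m1 m2
    proof -
      have "approx_renyi_div \<delta> \<alpha> (bernoulli_pmf (\<pi> m1)) (bernoulli_pmf (\<pi> m2))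
          \<le> approx_renyi_div \<delta> \<alpha> (psp_mech \<pi> (Xm m1)) (psp_mech \<pi> (Xm m2))"
        unfolding mech by (rule approx_map_inj_ge[OF single_inj d0 d1])
      also have "\<dots> \<le> ereal \<epsilon>" using pr ds that unfolding psp_rdp_def by blast
      finally show ?thesis .
    qed
    show ?thesis
    proof (induction n)
      case 0 thus ?case using pi0 by simp
    next
      case (Suc n)
      let ?s = "pi_star \<delta> \<alpha> \<epsilon> n" and ?b = "\<pi> (Suc n)" and ?a = "\<pi> n"
      have sL: "?s \<le> pi_star \<delta> \<alpha> \<epsilon> (Suc n)"
        using L_props(2)[OF range(1,2) Fs_self[OF range(1,2)]] by simp
      show ?case
      proof (cases "?b \<le> ?s")
        case True thus ?thesis using sL by simp
      next
        case False
        have "?b \<in> Fs \<delta> \<alpha> \<epsilon> ?a"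
          unfolding Fs_def using bb[OF nb(1)[of n]] bb[OF nb(2)[of n]] pi1[of "Suc n"] Suc False by auto
        hence "?b \<in> Fs \<delta> \<alpha> \<epsilon> ?s"
          by (rule Fs_mono[rotated 3]) (use pi1[of n] Suc False in auto)
        thus ?thesis using L_props(2)[OF range(1,2)] by simp
      qed
    qed
  qed
  show ?thesis using psp rdp opt by blast
qed


end
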